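(* Let $d\ge1$, $\Omega_s<0$, $\mathbf{\Omega}_a\in\mathbb{R}^{d\times d}$ skew-symmetric, $\mathbf{\Omega}=\Omega_s\mathbf{I}+\mathbf{\Omega}_a$, $D>0$, $\Sigma_0>0$, $\mathbf{m}_0\in\mathbb{R}^d$, $T>0$, $\epsilon\ge0$, and let $\hat{\mathbf{D}}\in\mathbb{R}^{d\times d}$ be symmetric. Let $\mathbf{m}_t=e^{\mathbf{\Omega}t}\mathbf{m}_0$ and $\sigma_t^2=\Sigma_0e^{2\Omega_st}+D(e^{2\Omega_st}-1)/\Omega_s$. Set $\mathbf{P}=\int_0^T\mathbf{m}_t\mathbf{m}_t^Tdt$ with eigendecomposition $\mathbf{P}=\sum_{i=1}^d\gamma_i\mathbf{u}_i\mathbf{u}_i^T$ ($\{\mathbf{u}_i\}$ orthonormal, $\gamma_1\ge\dots\ge\gamma_d\ge0$), let $l=\mathrm{rank}(\mathbf{P})$, let $\mathbf{Q}$ be the orthogonal projector onto $\mathrm{range}(\mathbf{P})$, let $\mu_{ij}=\mathbf{u}_i^T(\hat{\mathbf{D}}-D\mathbf{I})\mathbf{u}_j$, and $$q=\int_0^T\frac{\sigma_t^4}{\sqrt{\epsilon^2/16+\sigma_t^4}}dt,\qquad r=\int_0^T\frac{\sigma_t^2}{\sqrt{\epsilon^2/16+\sigma_t^4}}dt.$$ Consider, for $\hat{\mathbf{\Omega}}\in\mathbb{R}^{d\times d}$, the unregularized function $$\mathcal{L}_\epsilon(\hat{\mathbf{\Omega}})=\mathrm{tr}\Big((\hat{\mathbf{\Omega}}-\mathbf{\Omega})^T(\hat{\mathbf{\Omega}}-\mathbf{\Omega})\mathbf{P}+\tfrac{q}{4}(\hat{\mathbf{\Omega}}+\hat{\mathbf{\Omega}}^T-2\Omega_s\mathbf{I})^2+r(\hat{\mathbf{\Omega}}+\hat{\mathbf{\Omega}}^T-2\Omega_s\mathbf{I})(\hat{\mathbf{D}}-D\mathbf{I})\Big).$$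 Then the minimizers of $\mathcal{L}_\epsilon$ over $\mathbb{R}^{d\times d}$ are exactly the matrices $$\hat{\mathbf{\Omega}}=\mathbf{\Omega}-rq^{-1}(\mathbf{I}-\mathbf{Q})(\hat{\mathbf{D}}-D\mathbf{I})(\mathbf{I}-\mathbf{Q})-2\sum_{i=1}^{l}\sum_{j=1}^{d}\frac{\gamma_i\,rq^{-1}\mu_{ij}}{2q^{-1}\gamma_i\gamma_j+\gamma_i+\gamma_j}\mathbf{u}_i\mathbf{u}_j^T+\mathbf{K},$$ where $\mathbf{K}$ ranges over skew-symmetric matrices with $\mathbf{K}\mathbf{P}=0$. The minimizer is unique if and only if $\mathrm{rank}(\mathbf{P})\ge d-1$.
   Context: This is the $\lambda=0$ (no regularization) continuous-time limit of the Sinkhorn-divergence (entropic regularization $\epsilon$) inference loss for a linear force $\hat{\mathbf{\Omega}}\mathbf{x}$ with assumed diffusion $\hat{\mathbf{D}}$ for the isotropic Ornstein–Uhlenbeck process $d\mathbf{x}=\mathbf{\Omega}\mathbf{x}dt+\sqrt{2D}d\mathbf{W}$, $\mathbf{x}_0\sim\mathcal{N}(\mathbf{m}_0,\Sigma_0\mathbf{I})$; the claim concerns the explicit function above. *)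

theory Defs
  imports "HOL-Analysis.Analysis"
begin

fun mat_pow :: "real^'n^'n \<Rightarrow> nat \<Rightarrow> real^'n^'n" where
  "mat_pow A 0 = mat 1"
| "mat_pow A (Suc k) = A ** mat_pow A k"

definition mat_exp :: "real^'n^'n \<Rightarrow> real^'n^'n" where
  "mat_exp A = (\<Sum>k. (1 / fact k) *\<^sub>R mat_pow A k)"

definition outer :: "real^'n \<Rightarrow> real^'n \<Rightarrow> real^'n^'n" where
  "outer u v = (\<chi> i j. u $ i * v $ j)"

definition is_orth_projector :: "real^'n^'n \<Rightarrow> (real^'n) set \<Rightarrow> bool" where
  "is_orth_projector Q S \<longleftrightarrow> (\<forall>x. Q *v x \<in> S \<and> (\<forall>y\<in>S. (x - Q *v x) \<bullet> y = 0))"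

definition sinkhorn_loss ::
  "real^'n^'n \<Rightarrow> real \<Rightarrow> real^'n^'n \<Rightarrow> real \<Rightarrow> real^'n^'n \<Rightarrow> real \<Rightarrow> real \<Rightarrow> real^'n^'n \<Rightarrow> real" where
  "sinkhorn_loss Om Oms Dh D P q r Oh =
     trace (transpose (Oh - Om) ** (Oh - Om) ** P
       + (q / 4) *\<^sub>R ((Oh + transpose Oh - (2 * Oms) *\<^sub>R mat 1) ** (Oh + transpose Oh - (2 * Oms) *\<^sub>R mat 1))
       + r *\<^sub>R ((Oh + transpose Oh - (2 * Oms) *\<^sub>R mat 1) ** (Dh - D *\<^sub>R mat 1)))"

end

theory Submission
  imports Defs
begin


lemma outer_mv: "outer u v *v x = (v \<bullet> x) *\<^sub>R u"
  by (simp add: vec_eq_iff outer_def matrix_vector_mult_def inner_vec_def sum_distrib_left sum_distrib_right mult_ac)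

lemma mat_outer: "(M::real^'n^'n) ** outer u v = outer (M *v u) v"
  by (simp add: vec_eq_iff outer_def matrix_matrix_mult_def matrix_vector_mult_def sum_distrib_left sum_distrib_right mult_ac)

lemma trace_outer: "trace (outer u v) = u \<bullet> v"
  by (simp add: trace_def outer_def inner_vec_def)

lemma transpose_outer: "transpose (outer u v) = outer v u"
  by (simp add: vec_eq_iff outer_def transpose_def mult.commute)

lemma transpose_mv_inner: "(transpose (M::real^'n^'n) *v x) \<bullet> y = x \<bullet> (M *v y)"
  by (metis dot_lmul_matrix transpose_matrix_vector)

lemma scaleR_mv: "((c::real) *\<^sub>R (M::real^'n^'n)) *v x = c *\<^sub>R (M *v x)"
  by (simp add: scaleR_matrix_vector_assoc)

lemma sum_mv: "(\<Sum>i\<in>I. f i) *v (x::real^'n) = (\<Sum>i\<in>I. (f i :: real^'n^'n) *v x)"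
  by (induction I rule: infinite_finite_induct) (auto simp: matrix_vector_mult_add_rdistrib)

lemma mv_sum: "(M::real^'n^'n) *v (\<Sum>i\<in>I. f i) = (\<Sum>i\<in>I. M *v f i)"
  by (induction I rule: infinite_finite_induct) (auto simp: matrix_vector_right_distrib)

lemma uminus_mv: "(- (M::real^'n^'n)) *v x = - (M *v x)"
  by (simp add: vec_eq_iff matrix_vector_mult_def sum_negf)

lemma trace_scaleR: "trace ((c::real) *\<^sub>R (M::real^'n^'n)) = c * trace M"
  by (simp add: trace_def sum_distrib_left)

lemma trace_sum: "trace (\<Sum>i\<in>I. f i) = (\<Sum>i\<in>I. trace (f i :: real^'n^'n))"
  by (induction I rule: infinite_finite_induct) (auto simp: trace_add trace_0[simplified])

lemma trace_transpose': "trace (transpose (M::real^'n^'n)) = trace M"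
  by (simp add: trace_def transpose_def)

lemma sum_mat_mult: "(M::real^'n^'n) ** (\<Sum>i\<in>I. f i) = (\<Sum>i\<in>I. M ** f i)"
  by (induction I rule: infinite_finite_induct) (auto simp: matrix_add_ldistrib)

lemma trace_tsq_nonneg: "trace (transpose (S::real^'n^'n) ** S) \<ge> 0"
  by (simp add: trace_def matrix_matrix_mult_def transpose_def sum_nonneg)

lemma trace_tsq_zero: "trace (transpose (S::real^'n^'n) ** S) = 0 \<Longrightarrow> S = 0"
proof -
  assume a: "trace (transpose S ** S) = 0"
  have e: "trace (transpose S ** S) = (\<Sum>i\<in>UNIV. \<Sum>k\<in>UNIV. (S$k$i)\<^sup>2)"
    by (simp add: trace_def matrix_matrix_mult_def transpose_def power2_eq_square)
  have "\<forall>i\<in>UNIV. (\<Sum>k\<in>UNIV. (S$k$i)\<^sup>2) = 0"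
    using a unfolding e by (subst sum_nonneg_eq_0_iff[symmetric]) (auto intro: sum_nonneg)
  then have "\<forall>i k. (S$k$i)\<^sup>2 = 0"
    by (metis (no_types, lifting) UNIV_I finite sum_nonneg_eq_0_iff zero_le_power2)
  then show "S = 0" by (simp add: vec_eq_iff)
qed

lemma transpose_add': "transpose ((A::real^'n^'n) + B) = transpose A + transpose B"
  by (simp add: vec_eq_iff transpose_def)
lemma transpose_diff': "transpose ((A::real^'n^'n) - B) = transpose A - transpose B"
  by (simp add: vec_eq_iff transpose_def)
lemma transpose_uminus': "transpose (- (A::real^'n^'n)) = - transpose A"
  by (simp add: vec_eq_iff transpose_def)
lemma transpose_zero': "transpose (0::real^'n^'n) = 0"
  by (simp add: vec_eq_iff transpose_def)
lemma transpose_sum': "transpose (\<Sum>i\<in>I. f i) = (\<Sum>i\<in>I. transpose (f i :: real^'n^'n))"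
  by (induction I rule: infinite_finite_induct) (auto simp: transpose_add' transpose_zero')
lemma matrix_add_rdistrib': "((A::real^'n^'n) + B) ** C = A ** C + B ** C"
  by (simp add: vec_eq_iff matrix_matrix_mult_def distrib_right sum.distrib)
lemma matrix_diff_rdistrib': "((A::real^'n^'n) - B) ** C = A ** C - B ** C"
  by (simp add: vec_eq_iff matrix_matrix_mult_def left_diff_distrib sum_subtractf)
lemma matrix_diff_ldistrib': "(C::real^'n^'n) ** (A - B) = C ** A - C ** B"
  by (simp add: vec_eq_iff matrix_matrix_mult_def right_diff_distrib sum_subtractf)
lemma matrix_scaleR_right': "(A::real^'n^'n) ** (c *\<^sub>R B) = c *\<^sub>R (A ** B)"
  by (simp add: vec_eq_iff matrix_matrix_mult_def sum_distrib_left mult_ac)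
lemma matrix_scaleR_left': "(c *\<^sub>R (A::real^'n^'n)) ** B = c *\<^sub>R (A ** B)"
  by (simp add: vec_eq_iff matrix_matrix_mult_def sum_distrib_left mult_ac)

lemma loss_expand:
  fixes X H P E :: "real^'n^'n" and q r :: real
  assumes sP: "transpose P = P" and sE: "transpose E = E"
    and G: "X ** P + (q/2) *\<^sub>R (X + transpose X) + r *\<^sub>R E = 0"
  shows "trace (transpose (X+H) ** (X+H) ** P + (q/4) *\<^sub>R ((X+H + transpose (X+H)) ** (X+H + transpose (X+H))) + r *\<^sub>R ((X+H + transpose (X+H)) ** E))
    = trace (transpose X ** X ** P + (q/4) *\<^sub>R ((X + transpose X) ** (X + transpose X)) + r *\<^sub>R ((X + transpose X) ** E))
      + (trace (transpose H ** H ** P) + q/4 * trace ((H + transpose H) ** (H + transpose H)))"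
proof -
  define tH where "tH M = trace (transpose H ** M)" for M :: "real^'n^'n"
  define SX where "SX = X + transpose X"
  define SH where "SH = H + transpose H"
  have tSX: "transpose SX = SX" unfolding SX_def by (simp add: transpose_add' add.commute)
  have lin: "tH (X ** P) + (q/2) * tH SX + r * tH E = 0"
  proof -
    have "tH (X ** P + (q/2) *\<^sub>R SX + r *\<^sub>R E) = 0" using G unfolding SX_def tH_def by (simp add: trace_def)
    then show ?thesis unfolding tH_def by (simp add: matrix_add_ldistrib matrix_scaleR_right' trace_add trace_scaleR)
  qed
  have e1: "trace (transpose X ** H ** P) = tH (X ** P)"
  proof -
    have "trace (transpose X ** H ** P) = trace (transpose (transpose X ** H ** P))" by (simp add: trace_transpose')
    also have "\<dots> = trace (P ** (transpose H ** X))" by (simp add: matrix_transpose_mul sP matrix_mul_assoc)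
    also have "\<dots> = trace ((transpose H ** X) ** P)" by (rule trace_mul_sym)
    finally show ?thesis unfolding tH_def by (simp add: matrix_mul_assoc)
  qed
  have e2: "trace (transpose H ** X ** P) = tH (X ** P)" unfolding tH_def by (simp add: matrix_mul_assoc)
  have e6: "trace (H ** M) = tH (transpose M)" for M
  proof -
    have "trace (H ** M) = trace (transpose (H ** M))" by (simp add: trace_transpose')
    also have "\<dots> = trace (transpose M ** transpose H)" by (simp add: matrix_transpose_mul)
    also have "\<dots> = tH (transpose M)" unfolding tH_def by (rule trace_mul_sym)
    finally show ?thesis .
  qed
  have e3: "trace (SH ** SX) = 2 * tH SX"
    unfolding SH_def by (simp add: matrix_add_rdistrib' trace_add e6 tSX tH_def)
  have e4: "trace (SX ** SH) = 2 * tH SX" using e3 trace_mul_sym by metis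
  have e5: "trace (SH ** E) = 2 * tH E"
    unfolding SH_def by (simp add: matrix_add_rdistrib' trace_add e6 sE tH_def)
  have "X + H + transpose (X + H) = SX + SH" unfolding SX_def SH_def by (simp add: transpose_add')
  then have "trace (transpose (X+H) ** (X+H) ** P + (q/4) *\<^sub>R ((X+H + transpose (X+H)) ** (X+H + transpose (X+H))) + r *\<^sub>R ((X+H + transpose (X+H)) ** E))
     = trace (transpose X ** X ** P) + trace (transpose X ** H ** P) + trace (transpose H ** X ** P) + trace (transpose H ** H ** P)
       + q/4 * (trace (SX ** SX) + trace (SX ** SH) + trace (SH ** SX) + trace (SH ** SH))
       + r * (trace (SX ** E) + trace (SH ** E))"
    by (simp add: transpose_add' matrix_add_ldistrib matrix_add_rdistrib' trace_add trace_scaleR algebra_simps)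
  also have "\<dots> = trace (transpose X ** X ** P + (q/4) *\<^sub>R (SX ** SX) + r *\<^sub>R (SX ** E))
      + (trace (transpose H ** H ** P) + q/4 * trace (SH ** SH)) + 2 * (tH (X ** P) + (q/2) * tH SX + r * tH E)"
    unfolding e1 e2 e3 e4 e5 by (simp add: trace_add trace_scaleR algebra_simps)
  finally show ?thesis using lin unfolding SX_def SH_def by simp
qed



locale onb =
  fixes u :: "nat \<Rightarrow> real^'n"
  assumes orth: "\<And>i j. i < CARD('n) \<Longrightarrow> j < CARD('n) \<Longrightarrow> u i \<bullet> u j = (if i = j then 1 else 0)"
begin

lemma inner_sum_delta: "a < CARD('n) \<Longrightarrow> u a \<bullet> (\<Sum>b<CARD('n). c b *\<^sub>R u b) = c a"
proof -
  assume a: "a < CARD('n)"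
  have "u a \<bullet> (\<Sum>b<CARD('n). c b *\<^sub>R u b) = (\<Sum>b<CARD('n). c b * (u a \<bullet> u b))"
    by (simp add: inner_sum_right)
  also have "\<dots> = (\<Sum>b<CARD('n). if b = a then c b else 0)"
    by (rule sum.cong) (use a orth in auto)
  also have "\<dots> = c a" using a by simp
  finally show ?thesis .
qed

lemma span_all: "span (u ` {..<CARD('n)}) = UNIV"
proof -
  let ?U = "u ` {..<CARD('n)}"
  have inj: "inj_on u {..<CARD('n)}"
  proof (rule inj_onI)
    fix i j assume "i \<in> {..<CARD('n)}" "j \<in> {..<CARD('n)}" "u i = u j"
    then show "i = j" using orth[of i j] orth[of i i] by (auto split: if_splits)
  qed
  have ind: "independent ?U"
  proof (rule pairwise_orthogonal_independent)
    show "pairwise orthogonal ?U"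
      unfolding pairwise_def orthogonal_def using orth by fastforce
    show "0 \<notin> ?U" using orth by fastforce
  qed
  have card: "card ?U = CARD('n)" using inj by (simp add: card_image)
  have "UNIV \<subseteq> span ?U"
    by (rule card_ge_dim_independent) (use ind card in auto)
  then show ?thesis by auto
qed

lemma expand: "x = (\<Sum>b<CARD('n). (u b \<bullet> x) *\<^sub>R u b)"
proof -
  define y where "y = x - (\<Sum>b<CARD('n). (u b \<bullet> x) *\<^sub>R u b)"
  have o: "orthogonal y z" if zU: "z \<in> u ` {..<CARD('n)}" for z
  proof -
    obtain a where a: "a < CARD('n)" "z = u a" using zU by auto
    have "u a \<bullet> y = 0" unfolding y_def inner_diff_right using inner_sum_delta[OF a(1)] by simp
    then show ?thesis using a by (simp add: orthogonal_def inner_commute)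
  qed
  have "orthogonal y y"
    by (rule orthogonal_to_span[of y "u ` {..<CARD('n)}"]) (use o span_all in auto)
  then have "y = 0" by (simp add: orthogonal_def)
  then show ?thesis unfolding y_def by simp
qed

lemma vec_zero: "(\<And>a. a < CARD('n) \<Longrightarrow> u a \<bullet> x = 0) \<Longrightarrow> x = 0"
  by (subst expand) simp

lemma mat_zero: "(\<And>a b. a < CARD('n) \<Longrightarrow> b < CARD('n) \<Longrightarrow> u a \<bullet> (M *v u b) = 0) \<Longrightarrow> M = (0::real^'n^'n)"
proof -
  assume h: "\<And>a b. a < CARD('n) \<Longrightarrow> b < CARD('n) \<Longrightarrow> u a \<bullet> (M *v u b) = 0"
  have mb: "M *v u b = 0" if "b < CARD('n)" for b using h that vec_zero by blast
  have "M *v x = 0 *v x" for x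
  proof -
    have "M *v x = M *v (\<Sum>b<CARD('n). (u b \<bullet> x) *\<^sub>R u b)" by (subst expand) simp
    also have "\<dots> = (\<Sum>b<CARD('n). M *v ((u b \<bullet> x) *\<^sub>R u b))"
      by (rule mv_sum)
    also have "\<dots> = (\<Sum>b<CARD('n). (u b \<bullet> x) *\<^sub>R (M *v u b))"
      by (simp only: matrix_vector_mult_scaleR)
    also have "\<dots> = 0" using mb by simp
    finally show ?thesis by simp
  qed
  then show ?thesis using matrix_eq by blast
qed

end


lemma outer_mat: "outer u v ** (M::real^'n^'n) = outer u (transpose M *v v)"
  by (simp add: vec_eq_iff outer_def matrix_matrix_mult_def matrix_vector_mult_def transpose_def sum_distrib_left mult_ac)

locale setting = onb u for u :: "nat \<Rightarrow> real^'n" +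
  fixes gam :: "nat \<Rightarrow> real" and P Q E :: "real^'n^'n" and l :: nat and q r :: real
  assumes sorted: "\<And>i j. i \<le> j \<Longrightarrow> j < CARD('n) \<Longrightarrow> gam j \<le> gam i"
  and nonneg: "\<And>i. i < CARD('n) \<Longrightarrow> gam i \<ge> 0"
  and Pdef: "P = (\<Sum>i<CARD('n). gam i *\<^sub>R outer (u i) (u i))"
  and ldef: "l = rank P"
  and Qp: "is_orth_projector Q (range (\<lambda>x. P *v x))"
  and sE: "transpose E = E"
  and qpos: "q > 0"
begin

lemma P_mv: "P *v x = (\<Sum>i<CARD('n). (gam i * (u i \<bullet> x)) *\<^sub>R u i)"
  unfolding Pdef by (simp add: sum_mv scaleR_mv outer_mv inner_commute)

lemma u_P: "a < CARD('n) \<Longrightarrow> u a \<bullet> (P *v x) = gam a * (u a \<bullet> x)"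
  unfolding P_mv by (rule inner_sum_delta)

lemma P_u: "b < CARD('n) \<Longrightarrow> P *v u b = gam b *\<^sub>R u b"
proof -
  assume b: "b < CARD('n)"
  have "P *v u b - gam b *\<^sub>R u b = 0"
  proof (rule vec_zero)
    fix a assume a: "a < CARD('n)"
    show "u a \<bullet> (P *v u b - gam b *\<^sub>R u b) = 0"
      using u_P[OF a] orth[OF a b] by (auto simp: inner_diff_right)
  qed
  then show ?thesis by simp
qed

lemma P_sym: "transpose P = P"
  unfolding Pdef by (simp add: transpose_sum' transpose_scalar transpose_outer)

lemma range_P: "range (\<lambda>x. P *v x) = span (u ` {i. i < CARD('n) \<and> gam i \<noteq> 0})"
proof
  let ?Z = "{i. i < CARD('n) \<and> gam i \<noteq> 0}"
  show "range (\<lambda>x. P *v x) \<subseteq> span (u ` ?Z)"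
  proof clarify
    fix x
    show "P *v x \<in> span (u ` ?Z)"
      unfolding P_mv
    proof (rule span_sum)
      fix i assume "i \<in> {..<CARD('n)}"
      then show "(gam i * (u i \<bullet> x)) *\<^sub>R u i \<in> span (u ` ?Z)"
      proof (cases "gam i = 0")
        case True then show ?thesis by (simp add: span_zero)
      next
        case False
        then have "u i \<in> span (u ` ?Z)" using \<open>i \<in> {..<CARD('n)}\<close> by (intro span_base) auto
        then show ?thesis by (rule span_mul)
      qed
    qed
  qed
  show "span (u ` ?Z) \<subseteq> range (\<lambda>x. P *v x)"
  proof (rule span_minimal)
    show "subspace (range (\<lambda>x. P *v x))"
      unfolding subspace_def
    proof (intro conjI ballI allI)
      show "0 \<in> range (\<lambda>x. P *v x)" by (metis matrix_vector_mult_0_right rangeI)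
      fix a b assume "a \<in> range (\<lambda>x. P *v x)" "b \<in> range (\<lambda>x. P *v x)"
      then obtain x y where "a = P *v x" "b = P *v y" by auto
      then show "a + b \<in> range (\<lambda>x. P *v x)" by (metis matrix_vector_right_distrib rangeI)
    next
      fix c a assume "a \<in> range (\<lambda>x. P *v x)"
      then obtain x where "a = P *v x" by auto
      then show "c *\<^sub>R a \<in> range (\<lambda>x. P *v x)" by (metis matrix_vector_mult_scaleR rangeI)
    qed
    show "u ` ?Z \<subseteq> range (\<lambda>x. P *v x)"
    proof clarify
      fix i assume i: "i < CARD('n)" "gam i \<noteq> 0"
      have "P *v ((1 / gam i) *\<^sub>R u i) = u i" using i by (simp add: matrix_vector_mult_scaleR P_u)
      then show "u i \<in> range (\<lambda>x. P *v x)" by (metis rangeI)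
    qed
  qed
qed

lemma rank_card: "l = card {i. i < CARD('n) \<and> gam i \<noteq> 0}"
proof -
  let ?Z = "{i. i < CARD('n) \<and> gam i \<noteq> 0}"
  have inj: "inj_on u {..<CARD('n)}"
  proof (rule inj_onI)
    fix i j assume "i \<in> {..<CARD('n)}" "j \<in> {..<CARD('n)}" "u i = u j"
    then show "i = j" using orth[of i j] orth[of i i] by (auto split: if_splits)
  qed
  have ind: "independent (u ` {..<CARD('n)})"
  proof (rule pairwise_orthogonal_independent)
    show "pairwise orthogonal (u ` {..<CARD('n)})"
      unfolding pairwise_def orthogonal_def using orth by fastforce
    show "0 \<notin> u ` {..<CARD('n)}" using orth by fastforce
  qed
  have ind2: "independent (u ` ?Z)" by (rule independent_mono[OF ind]) auto
  have "l = dim (span (u ` ?Z))" unfolding ldef rank_dim_range range_P ..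
  also have "\<dots> = card (u ` ?Z)" by (rule dim_span_eq_card_independent[OF ind2])
  also have "\<dots> = card ?Z" by (rule card_image) (rule inj_on_subset[OF inj], auto)
  finally show ?thesis .
qed

lemma gam_pos: "i < CARD('n) \<Longrightarrow> gam i > 0 \<longleftrightarrow> i < l"
proof -
  assume i: "i < CARD('n)"
  let ?Z = "{i. i < CARD('n) \<and> gam i \<noteq> 0}"
  have Z: "?Z = {i. i < CARD('n) \<and> gam i > 0}" using nonneg by force
  show ?thesis
  proof
    assume g: "gam i > 0"
    have "{..i} \<subseteq> ?Z" using g sorted i by (force simp: Z)
    then have "card {..i} \<le> card ?Z" by (rule card_mono[rotated]) auto
    then show "i < l" using rank_card by simp
  next
    assume il: "i < l"
    show "gam i > 0"
    proof (rule ccontr)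
      assume "\<not> gam i > 0"
      then have g0: "gam i = 0" using nonneg[OF i] by simp
      have "?Z \<subseteq> {..<i}"
      proof
        fix j assume "j \<in> ?Z"
        then have j: "j < CARD('n)" "gam j > 0" unfolding Z by auto
        show "j \<in> {..<i}"
        proof (rule ccontr)
          assume "j \<notin> {..<i}"
          then have "i \<le> j" by simp
          then have "gam j \<le> gam i" using sorted j(1) by blast
          then show False using g0 j(2) by simp
        qed
      qed
      then have "card ?Z \<le> i" using card_mono[of "{..<i}" ?Z] by simp
      then show False using il rank_card by simp
    qed
  qed
qed

lemma gam_zero: "i < CARD('n) \<Longrightarrow> \<not> i < l \<Longrightarrow> gam i = 0"
  using gam_pos nonneg by force

lemma l_le: "l \<le> CARD('n)"
  using rank_card card_mono[of "{..<CARD('n)}" "{i. i < CARD('n) \<and> gam i \<noteq> 0}"] by force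

lemma IQ: "a < CARD('n) \<Longrightarrow> u a \<bullet> ((mat 1 - Q) *v y) = (if a < l then 0 else u a \<bullet> y)"
proof -
  assume a: "a < CARD('n)"
  have e: "(mat 1 - Q) *v y = y - Q *v y" by (simp add: matrix_vector_mult_diff_rdistrib)
  show ?thesis
  proof (cases "a < l")
    case True
    then have "gam a > 0" using gam_pos a by simp
    then have "P *v ((1 / gam a) *\<^sub>R u a) = u a" using a by (simp add: matrix_vector_mult_scaleR P_u)
    then have "u a \<in> range (\<lambda>x. P *v x)" by (metis rangeI)
    then have "(y - Q *v y) \<bullet> u a = 0" using Qp unfolding is_orth_projector_def by blast
    then show ?thesis using True e by (simp add: inner_commute)
  next
    case False
    have "Q *v y \<in> range (\<lambda>x. P *v x)" using Qp unfolding is_orth_projector_def by blast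
    then obtain z where "Q *v y = P *v z" by auto
    then have "u a \<bullet> (Q *v y) = 0" using u_P[OF a] gam_zero[OF a False] by simp
    then show ?thesis using False e by (simp add: inner_diff_right)
  qed
qed

lemma IQ_u: "b < CARD('n) \<Longrightarrow> (mat 1 - Q) *v u b = (if b < l then 0 else u b)"
proof -
  assume b: "b < CARD('n)"
  have "(mat 1 - Q) *v u b - (if b < l then 0 else u b) = 0"
  proof (rule vec_zero)
    fix a assume a: "a < CARD('n)"
    show "u a \<bullet> ((mat 1 - Q) *v u b - (if b < l then 0 else u b)) = 0"
      using IQ[OF a, of "u b"] orth[OF a b] by (auto simp: inner_diff_right)
  qed
  then show ?thesis by simp
qed

end


lemma arith1:
  fixes q ga gb r m :: real
  assumes "q > 0" "ga > 0" "gb > 0"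
  shows "gb * (- 2 * (ga * (r / q) * m / (2 / q * ga * gb + ga + gb))) + q / 2 * (- 2 * (ga * (r / q) * m / (2 / q * ga * gb + ga + gb)) - 2 * (gb * (r / q) * m / (2 / q * gb * ga + gb + ga))) + r * m = 0"
proof -
  define d where "d = 2 / q * ga * gb + ga + gb"
  have d2: "2 / q * gb * ga + gb + ga = d" unfolding d_def by simp
  have dp: "d > 0" unfolding d_def using assms by (simp add: add_pos_pos)
  have dq: "d * q = 2 * ga * gb + q * ga + q * gb" unfolding d_def using assms by (simp add: field_simps)
  define e where "e = r * m / (d * q)"
  have e1: "ga * (r / q) * m / d = ga * e" "gb * (r / q) * m / d = gb * e" unfolding e_def by (simp_all add: mult.commute mult.assoc)
  have e2: "e * (d * q) = r * m" unfolding e_def using dp assms by simp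
  have "gb * (- 2 * (ga * e)) + q / 2 * (- 2 * (ga * e) - 2 * (gb * e)) + r * m = r * m - e * (2 * ga * gb + q * ga + q * gb)"
    by (simp add: algebra_simps)
  also have "\<dots> = 0" using e2 dq by simp
  finally show ?thesis unfolding d2 d_def[symmetric] e1 .
qed

locale setting2 = setting u gam P Q E l q r for u :: "nat \<Rightarrow> real^'n" and gam P Q E l q r +
  fixes mu :: "nat \<Rightarrow> nat \<Rightarrow> real" and cc :: "nat \<Rightarrow> nat \<Rightarrow> real" and X :: "real^'n^'n"
  assumes mudef: "\<And>i j. mu i j = u i \<bullet> (E *v u j)"
  and ccdef: "\<And>i j. cc i j = gam i * (r / q) * mu i j / (2 / q * gam i * gam j + gam i + gam j)"
  and Xdef: "X = - (r/q) *\<^sub>R ((mat 1 - Q) ** E ** (mat 1 - Q)) - 2 *\<^sub>R (\<Sum>i<l. \<Sum>j<CARD('n). cc i j *\<^sub>R outer (u i) (u j))"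
begin

lemma mu_sym: "mu a b = mu b a"
  unfolding mudef by (metis transpose_mv_inner sE inner_commute)

lemma M1_coord: "a < CARD('n) \<Longrightarrow> b < CARD('n) \<Longrightarrow>
  u a \<bullet> (((mat 1 - Q) ** E ** (mat 1 - Q)) *v u b) = (if a < l \<or> b < l then 0 else mu a b)"
proof -
  assume a: "a < CARD('n)" and b: "b < CARD('n)"
  have "((mat 1 - Q) ** E ** (mat 1 - Q)) *v u b = (mat 1 - Q) *v (E *v ((mat 1 - Q) *v u b))"
    by (metis matrix_vector_mul_assoc)
  then show ?thesis using IQ[OF a] IQ_u[OF b] by (simp add: mudef)
qed

lemma M2_coord: "a < CARD('n) \<Longrightarrow> b < CARD('n) \<Longrightarrow>
  u a \<bullet> ((\<Sum>i<l. \<Sum>j<CARD('n). cc i j *\<^sub>R outer (u i) (u j)) *v u b) = (if a < l then cc a b else 0)"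
proof -
  assume a: "a < CARD('n)" and b: "b < CARD('n)"
  have "u a \<bullet> ((\<Sum>i<l. \<Sum>j<CARD('n). cc i j *\<^sub>R outer (u i) (u j)) *v u b)
     = (\<Sum>i<l. \<Sum>j<CARD('n). cc i j * (u j \<bullet> u b) * (u a \<bullet> u i))"
    by (simp add: sum_mv scaleR_mv outer_mv inner_sum_right)
  also have "\<dots> = (\<Sum>i<l. cc i b * (u a \<bullet> u i))"
  proof (rule sum.cong[OF refl])
    fix i assume "i \<in> {..<l}"
    have "(\<Sum>j<CARD('n). cc i j * (u j \<bullet> u b) * (u a \<bullet> u i)) = (\<Sum>j<CARD('n). if j = b then cc i b * (u a \<bullet> u i) else 0)"
      by (rule sum.cong[OF refl]) (use orth b in auto)
    also have "\<dots> = cc i b * (u a \<bullet> u i)" using b by simp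
    finally show "(\<Sum>j<CARD('n). cc i j * (u j \<bullet> u b) * (u a \<bullet> u i)) = cc i b * (u a \<bullet> u i)" .
  qed
  also have "\<dots> = (\<Sum>i<l. if i = a then cc a b else 0)"
    by (rule sum.cong[OF refl]) (use orth a l_le in auto)
  also have "\<dots> = (if a < l then cc a b else 0)" by simp
  finally show ?thesis .
qed

lemma X_coord: "a < CARD('n) \<Longrightarrow> b < CARD('n) \<Longrightarrow>
  u a \<bullet> (X *v u b) = - (r/q) * (if a < l \<or> b < l then 0 else mu a b) - 2 * (if a < l then cc a b else 0)"
  unfolding Xdef
  by (simp add: matrix_vector_mult_diff_rdistrib uminus_mv scaleR_mv inner_diff_right M1_coord M2_coord
      del: transpose_matrix_vector)

lemma G0: "X ** P + (q/2) *\<^sub>R (X + transpose X) + r *\<^sub>R E = 0"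
proof (rule mat_zero)
  fix a b assume a: "a < CARD('n)" and b: "b < CARD('n)"
  have t: "u a \<bullet> (transpose X *v u b) = u b \<bullet> (X *v u a)"
    by (metis transpose_mv_inner inner_commute)
  have "u a \<bullet> ((X ** P + (q/2) *\<^sub>R (X + transpose X) + r *\<^sub>R E) *v u b)
    = gam b * (u a \<bullet> (X *v u b)) + q/2 * (u a \<bullet> (X *v u b) + u a \<bullet> (transpose X *v u b)) + r * mu a b"
    by (simp add: matrix_vector_mult_add_rdistrib scaleR_mv inner_add_right P_u[OF b] mudef
        matrix_vector_mul_assoc[symmetric] matrix_vector_mult_scaleR del: transpose_matrix_vector)
  also have "\<dots> = 0"
    unfolding t X_coord[OF a b] X_coord[OF b a] ccdef mu_sym[of b a]
  proof -
    show "gam b * (- (r / q) * (if a < l \<or> b < l then 0 else mu a b) - 2 * (if a < l then gam a * (r / q) * mu a b / (2 / q * gam a * gam b + gam a + gam b) else 0)) +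
    q / 2 * (- (r / q) * (if a < l \<or> b < l then 0 else mu a b) - 2 * (if a < l then gam a * (r / q) * mu a b / (2 / q * gam a * gam b + gam a + gam b) else 0) +
       (- (r / q) * (if b < l \<or> a < l then 0 else mu a b) - 2 * (if b < l then gam b * (r / q) * mu a b / (2 / q * gam b * gam a + gam b + gam a) else 0))) +
    r * mu a b = 0"
    proof (cases "a < l"; cases "b < l")
      assume al: "a < l" and bl: "b < l"
      have ga: "gam a > 0" and gb: "gam b > 0" using gam_pos a b al bl by auto
      have d: "2 / q * gam a * gam b + gam a + gam b > 0" using ga gb qpos by (simp add: add_pos_pos)
      have d2: "2 / q * gam b * gam a + gam b + gam a = 2 / q * gam a * gam b + gam a + gam b" by simp
      show ?thesis using al bl arith1[OF qpos ga gb, of r "mu a b"] by simp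
    next
      assume al: "a < l" and bl: "\<not> b < l"
      have ga: "gam a > 0" and gb: "gam b = 0" using gam_pos gam_zero a b al bl by auto
      show ?thesis using al bl ga gb qpos by (simp add: field_simps)
    next
      assume al: "\<not> a < l" and bl: "b < l"
      have ga: "gam a = 0" and gb: "gam b > 0" using gam_pos gam_zero a b al bl by auto
      show ?thesis using al bl ga gb qpos by (simp add: field_simps)
    next
      assume al: "\<not> a < l" and bl: "\<not> b < l"
      have ga: "gam a = 0" and gb: "gam b = 0" using gam_zero a b al bl by auto
      show ?thesis using al bl ga gb qpos by (simp add: field_simps)
    qed
  qed
  finally show "u a \<bullet> ((X ** P + (q/2) *\<^sub>R (X + transpose X) + r *\<^sub>R E) *v u b) = 0" .
qed

end


context setting
begin

lemma HP: fixes H :: "real^'n^'n" shows "H ** P = (\<Sum>i<CARD('n). gam i *\<^sub>R outer (H *v u i) (u i))"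
  unfolding Pdef by (simp add: sum_mat_mult matrix_scaleR_right' mat_outer)

lemma trHHP: fixes H :: "real^'n^'n" shows "trace (transpose H ** H ** P) = (\<Sum>i<CARD('n). gam i * ((H *v u i) \<bullet> (H *v u i)))"
proof -
  have "trace (transpose H ** H ** P) = (\<Sum>i<CARD('n). gam i * (((transpose H ** H) *v u i) \<bullet> u i))"
    unfolding HP by (simp add: trace_sum trace_scaleR trace_outer del: transpose_matrix_vector)
  also have "\<dots> = (\<Sum>i<CARD('n). gam i * ((H *v u i) \<bullet> (H *v u i)))"
    by (simp add: matrix_vector_mul_assoc[symmetric] transpose_mv_inner del: transpose_matrix_vector)
  finally show ?thesis .
qed

lemma trHHP_nonneg: fixes H :: "real^'n^'n" shows "trace (transpose H ** H ** P) \<ge> 0"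
  unfolding trHHP by (rule sum_nonneg) (simp add: nonneg)

lemma sym_sq: fixes H :: "real^'n^'n" shows "trace ((H + transpose H) ** (H + transpose H)) \<ge> 0"
proof -
  have "transpose (H + transpose H) = H + transpose H" by (simp add: transpose_add' add.commute)
  then show ?thesis using trace_tsq_nonneg[of "H + transpose H"] by simp
qed

lemma Qf_nonneg: fixes H :: "real^'n^'n" shows "trace (transpose H ** H ** P) + q/4 * trace ((H + transpose H) ** (H + transpose H)) \<ge> 0"
  using trHHP_nonneg[of H] sym_sq[of H] qpos by (smt (verit) mult_nonneg_nonneg zero_le_divide_iff)

lemma Qf_zero: fixes H :: "real^'n^'n" shows "trace (transpose H ** H ** P) + q/4 * trace ((H + transpose H) ** (H + transpose H)) = 0
   \<longleftrightarrow> transpose H = - H \<and> H ** P = 0"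
proof
  assume z: "trace (transpose H ** H ** P) + q/4 * trace ((H + transpose H) ** (H + transpose H)) = 0"
  have a1: "trace (transpose H ** H ** P) \<ge> 0" by (rule trHHP_nonneg)
  have a2: "q/4 * trace ((H + transpose H) ** (H + transpose H)) \<ge> 0" using sym_sq[of H] qpos by simp
  have z1: "trace (transpose H ** H ** P) = 0" using z a1 a2 by linarith
  have "q/4 * trace ((H + transpose H) ** (H + transpose H)) = 0" using z a1 a2 by linarith
  then have z2: "trace ((H + transpose H) ** (H + transpose H)) = 0" using qpos by simp
  have "transpose (H + transpose H) = H + transpose H" by (simp add: transpose_add' add.commute)
  then have "H + transpose H = 0" using trace_tsq_zero[of "H + transpose H"] z2 by simp
  then have skew: "transpose H = - H" by (simp add: add_eq_0_iff)
  have "\<forall>i\<in>{..<CARD('n)}. gam i * ((H *v u i) \<bullet> (H *v u i)) = 0"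
    using z1 unfolding trHHP by (subst sum_nonneg_eq_0_iff[symmetric]) (auto simp: nonneg)
  then have "\<forall>i\<in>{..<CARD('n)}. gam i *\<^sub>R outer (H *v u i) (u i) = 0"
  proof (intro ballI)
    fix i assume "i \<in> {..<CARD('n)}" "\<forall>i\<in>{..<CARD('n)}. gam i * ((H *v u i) \<bullet> (H *v u i)) = 0"
    then have "gam i = 0 \<or> H *v u i = 0" by auto
    then show "gam i *\<^sub>R outer (H *v u i) (u i) = 0"
      by (metis outer_mv matrix_eq matrix_vector_mult_0 scaleR_zero_left scale_eq_0_iff inner_zero_left)
  qed
  then have "H ** P = 0" unfolding HP by (intro sum.neutral) blast
  then show "transpose H = - H \<and> H ** P = 0" using skew by simp
next
  assume h: "transpose H = - H \<and> H ** P = 0"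
  then have "H + transpose H = 0" by simp
  moreover have "transpose H ** H ** P = 0" using h by (simp add: matrix_mul_assoc[symmetric])
  ultimately show "trace (transpose H ** H ** P) + q/4 * trace ((H + transpose H) ** (H + transpose H)) = 0"
    by (simp add: trace_def)
qed

end


lemma outer_zero2: "outer u 0 = 0"
  by (simp add: outer_def vec_eq_iff)

context setting
begin

lemma kill:
  fixes K :: "real^'n^'n"
  assumes n: "CARD('n) \<le> l + 1" and sk: "transpose K = - K" and KP: "K ** P = 0"
  shows "K = 0"
proof (rule mat_zero)
  have Ku: "K *v u j = 0" if j: "j < l" for j
  proof -
    have jn: "j < CARD('n)" using j l_le by simp
    have "0 = (K ** P) *v u j" using KP by simp
    also have "\<dots> = gam j *\<^sub>R (K *v u j)"
      by (simp add: matrix_vector_mul_assoc[symmetric] P_u[OF jn] matrix_vector_mult_scaleR)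
    finally show ?thesis using gam_pos[OF jn] j by simp
  qed
  have tr: "u a \<bullet> (K *v u b) = - ((K *v u a) \<bullet> u b)" for a b
    using transpose_mv_inner[of K "u a" "u b"] sk by (simp add: uminus_mv del: transpose_matrix_vector)
  fix a b assume a: "a < CARD('n)" and b: "b < CARD('n)"
  show "u a \<bullet> (K *v u b) = 0"
  proof (cases "b < l")
    case True then show ?thesis using Ku by simp
  next
    case bF: False
    show ?thesis
    proof (cases "a < l")
      case True then show ?thesis using Ku tr by simp
    next
      case False
      then have "a = b" using a b bF n by simp
      then show ?thesis using tr[of a a] by (simp add: inner_commute)
    qed
  qed
qed

lemma nonunique:
  assumes n: "l + 2 \<le> CARD('n)"
  shows "\<exists>K::real^'n^'n. transpose K = - K \<and> K ** P = 0 \<and> K \<noteq> 0"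
proof -
  define K where "K = outer (u l) (u (l+1)) - outer (u (l+1)) (u l)"
  have l1: "l < CARD('n)" "l + 1 < CARD('n)" using n by auto
  have "transpose K = - K" unfolding K_def by (simp add: transpose_diff' transpose_outer)
  moreover have "K ** P = 0"
    unfolding K_def using l1
    by (simp add: matrix_diff_rdistrib' outer_mat P_sym P_u gam_zero outer_zero2 del: transpose_matrix_vector)
  moreover have "K *v u (l+1) = u l"
    unfolding K_def using orth[OF l1(2) l1(2)] orth[OF l1(1) l1(2)]
    by (simp add: matrix_vector_mult_diff_rdistrib outer_mv)
  then have "K \<noteq> 0" using orth[OF l1(1) l1(1)] by auto
  ultimately show ?thesis by blast
qed

end


lemma q_pos:
  fixes Oms D Sig0 T eps :: real and sig2 :: "real \<Rightarrow> real"
  assumes "Oms < 0" "D > 0" "Sig0 > 0" "T > 0"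
    and s: "\<And>t. sig2 t = Sig0 * exp (2 * Oms * t) + D * (exp (2 * Oms * t) - 1) / Oms"
  shows "integral {0..T} (\<lambda>t. (sig2 t)\<^sup>2 / sqrt (eps\<^sup>2 / 16 + (sig2 t)\<^sup>2)) > 0"
proof -
  have pos: "sig2 t > 0" if "t \<ge> 0" for t
  proof -
    have "2 * Oms * t \<le> 0" using assms(1) that by (simp add: mult_nonpos_nonneg)
    then have "exp (2 * Oms * t) - 1 \<le> 0" by simp
    then have "(exp (2 * Oms * t) - 1) / Oms \<ge> 0" using assms(1) by (simp add: divide_nonpos_neg)
    then have "D * (exp (2 * Oms * t) - 1) / Oms \<ge> 0" using assms(2) by (metis times_divide_eq_right less_eq_real_def zero_le_mult_iff)
    moreover have "Sig0 * exp (2 * Oms * t) > 0" using assms(3) by simp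
    ultimately show ?thesis unfolding s by linarith
  qed
  have cs: "continuous_on {0..T} sig2"
    unfolding s[abs_def] by (intro continuous_intros) (use assms in auto)
  have "integral {0..T} (\<lambda>t. 0) < integral {0..T} (\<lambda>t. (sig2 t)\<^sup>2 / sqrt (eps\<^sup>2 / 16 + (sig2 t)\<^sup>2))"
  proof (rule integral_less_real)
    show "continuous_on {0..T} (\<lambda>t. (sig2 t)\<^sup>2 / sqrt (eps\<^sup>2 / 16 + (sig2 t)\<^sup>2))"
    proof -
      have "sqrt (eps\<^sup>2 / 16 + (sig2 t)\<^sup>2) \<noteq> 0" if "t \<in> {0..T}" for t
      proof -
        have "sig2 t > 0" using pos that by auto
        then have "eps\<^sup>2 / 16 + (sig2 t)\<^sup>2 > 0" by (intro add_nonneg_pos) auto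
        then show ?thesis by simp
      qed
      then show ?thesis by (intro continuous_intros cs) auto
    qed
    show "0 < (sig2 t)\<^sup>2 / sqrt (eps\<^sup>2 / 16 + (sig2 t)\<^sup>2)" if "t \<in> {0<..<T}" for t
      using pos[of t] that by (auto intro!: divide_pos_pos add_nonneg_pos)
  qed (use assms in auto)
  then show ?thesis by simp
qed

theorem mainTheorem3:
  fixes Oms D Sig0 T eps :: real
    and Oma Om Dh P Q :: "real^'n^'n"
    and m0 :: "real^'n"
    and m :: "real \<Rightarrow> real^'n"
    and sig2 :: "real \<Rightarrow> real"
    and gam :: "nat \<Rightarrow> real"
    and u :: "nat \<Rightarrow> real^'n"
    and mu :: "nat \<Rightarrow> nat \<Rightarrow> real"
    and q r :: real
    and l :: nat
  assumes "Oms < 0"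
    and "transpose Oma = - Oma"
    and "Om = Oms *\<^sub>R mat 1 + Oma"
    and "D > 0" and "Sig0 > 0" and "T > 0" and "eps \<ge> 0"
    and "transpose Dh = Dh"
    and "\<And>t. m t = mat_exp (t *\<^sub>R Om) *v m0"
    and "\<And>t. sig2 t = Sig0 * exp (2 * Oms * t) + D * (exp (2 * Oms * t) - 1) / Oms"
    and "P = integral {0..T} (\<lambda>t. outer (m t) (m t))"
    and "\<And>i j. i < CARD('n) \<Longrightarrow> j < CARD('n) \<Longrightarrow> u i \<bullet> u j = (if i = j then 1 else 0)"
    and "\<And>i j. i \<le> j \<Longrightarrow> j < CARD('n) \<Longrightarrow> gam j \<le> gam i"
    and "\<And>i. i < CARD('n) \<Longrightarrow> gam i \<ge> 0"
    and "P = (\<Sum>i<CARD('n). gam i *\<^sub>R outer (u i) (u i))"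
    and "l = rank P"
    and "is_orth_projector Q (range (\<lambda>x. P *v x))"
    and "\<And>i j. mu i j = u i \<bullet> ((Dh - D *\<^sub>R mat 1) *v u j)"
    and "q = integral {0..T} (\<lambda>t. (sig2 t)\<^sup>2 / sqrt (eps\<^sup>2 / 16 + (sig2 t)\<^sup>2))"
    and "r = integral {0..T} (\<lambda>t. sig2 t / sqrt (eps\<^sup>2 / 16 + (sig2 t)\<^sup>2))"
  shows "{Oh. \<forall>X. sinkhorn_loss Om Oms Dh D P q r Oh \<le> sinkhorn_loss Om Oms Dh D P q r X}
           = {Om - (r / q) *\<^sub>R ((mat 1 - Q) ** (Dh - D *\<^sub>R mat 1) ** (mat 1 - Q))
                - 2 *\<^sub>R (\<Sum>i<l. \<Sum>j<CARD('n).
                     (gam i * (r / q) * mu i j / (2 / q * gam i * gam j + gam i + gam j))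
                       *\<^sub>R outer (u i) (u j))
                + K | K. transpose K = - K \<and> K ** P = 0}
       \<and> ((\<exists>!Oh. \<forall>X. sinkhorn_loss Om Oms Dh D P q r Oh \<le> sinkhorn_loss Om Oms Dh D P q r X)
            \<longleftrightarrow> rank P + 1 \<ge> CARD('n))"
proof -
  define E where "E = Dh - D *\<^sub>R mat 1"
  have sE: "transpose E = E" unfolding E_def using assms(8) by (simp add: transpose_diff' transpose_scalar)
  have qpos: "q > 0" using q_pos[OF assms(1,4,5,6,10)] assms(19) by simp
  interpret setting u gam P Q E l q r
    by unfold_locales (use assms(12,13,14,15,16,17) sE qpos in auto)
  define cc where "cc i j = gam i * (r / q) * mu i j / (2 / q * gam i * gam j + gam i + gam j)" for i j
  define X where "X = - (r/q) *\<^sub>R ((mat 1 - Q) ** E ** (mat 1 - Q)) - 2 *\<^sub>R (\<Sum>i<l. \<Sum>j<CARD('n). cc i j *\<^sub>R outer (u i) (u j))"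
  interpret setting2 u gam P Q E l q r mu cc X
    by unfold_locales (use assms(18) E_def cc_def X_def in auto)
  define Lq where "Lq A = trace (transpose A ** A ** P + (q/4) *\<^sub>R ((A + transpose A) ** (A + transpose A)) + r *\<^sub>R ((A + transpose A) ** E))" for A
  define Qf where "Qf H = trace (transpose H ** H ** P) + q/4 * trace ((H + transpose H) ** (H + transpose H))" for H
  have tOm: "transpose Om = Oms *\<^sub>R mat 1 - Oma"
    using assms(2,3) by (simp add: transpose_add' transpose_scalar)
  have Lform: "sinkhorn_loss Om Oms Dh D P q r Oh = Lq (Oh - Om)" for Oh
  proof -
    have s1: "Om + transpose Om = (Oms *\<^sub>R mat 1 + Oma) + (Oms *\<^sub>R mat 1 - Oma)" using assms(3) tOm by simp
    have s2: "(2 * Oms) *\<^sub>R (mat 1 :: real^'n^'n) = Oms *\<^sub>R mat 1 + Oms *\<^sub>R mat 1" by (metis mult_2 scaleR_left_distrib)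
    have sOm: "(2 * Oms) *\<^sub>R mat 1 = Om + transpose Om" unfolding s1 s2 by simp
    have "Oh + transpose Oh - (2 * Oms) *\<^sub>R mat 1 = (Oh - Om) + transpose (Oh - Om)"
      unfolding sOm by (simp add: transpose_diff' algebra_simps)
    then show ?thesis unfolding sinkhorn_loss_def Lq_def E_def by (simp only:)
  qed
  have expand: "Lq (X + H) = Lq X + Qf H" for H
    unfolding Lq_def Qf_def by (rule loss_expand[OF P_sym sE G0])
  have Q0: "Qf 0 = 0" unfolding Qf_def by (simp add: trace_def transpose_zero')
  have min_iff: "(\<forall>Y. sinkhorn_loss Om Oms Dh D P q r Oh \<le> sinkhorn_loss Om Oms Dh D P q r Y)
      \<longleftrightarrow> transpose (Oh - Om - X) = - (Oh - Om - X) \<and> (Oh - Om - X) ** P = 0" for Oh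
  proof -
    have LL: "sinkhorn_loss Om Oms Dh D P q r Y = Lq X + Qf (Y - Om - X)" for Y
      unfolding Lform using expand[of "Y - Om - X"] by (simp add: algebra_simps)
    have "(\<forall>Y. sinkhorn_loss Om Oms Dh D P q r Oh \<le> sinkhorn_loss Om Oms Dh D P q r Y) \<longleftrightarrow> Qf (Oh - Om - X) = 0"
    proof
      assume h: "\<forall>Y. sinkhorn_loss Om Oms Dh D P q r Oh \<le> sinkhorn_loss Om Oms Dh D P q r Y"
      have "Qf (Oh - Om - X) \<le> 0" using h[rule_format, of "Om + X"] unfolding LL by (simp add: Q0)
      then show "Qf (Oh - Om - X) = 0" using Qf_nonneg unfolding Qf_def by (meson order_antisym)
    next
      assume "Qf (Oh - Om - X) = 0"
      then show "\<forall>Y. sinkhorn_loss Om Oms Dh D P q r Oh \<le> sinkhorn_loss Om Oms Dh D P q r Y"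
        unfolding LL using Qf_nonneg unfolding Qf_def by simp
    qed
    then show ?thesis using Qf_zero unfolding Qf_def by simp
  qed
  have RHS: "Om - (r / q) *\<^sub>R ((mat 1 - Q) ** (Dh - D *\<^sub>R mat 1) ** (mat 1 - Q))
                - 2 *\<^sub>R (\<Sum>i<l. \<Sum>j<CARD('n).
                     (gam i * (r / q) * mu i j / (2 / q * gam i * gam j + gam i + gam j))
                       *\<^sub>R outer (u i) (u j)) + K = Om + X + K" for K
    unfolding X_def E_def cc_def by (simp add: algebra_simps)
  have part1: "{Oh. \<forall>X. sinkhorn_loss Om Oms Dh D P q r Oh \<le> sinkhorn_loss Om Oms Dh D P q r X}
           = {Om - (r / q) *\<^sub>R ((mat 1 - Q) ** (Dh - D *\<^sub>R mat 1) ** (mat 1 - Q))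
                - 2 *\<^sub>R (\<Sum>i<l. \<Sum>j<CARD('n).
                     (gam i * (r / q) * mu i j / (2 / q * gam i * gam j + gam i + gam j))
                       *\<^sub>R outer (u i) (u j))
                + K | K. transpose K = - K \<and> K ** P = 0}"
    unfolding RHS
  proof (intro set_eqI iffI)
    fix Oh assume "Oh \<in> {Oh. \<forall>X. sinkhorn_loss Om Oms Dh D P q r Oh \<le> sinkhorn_loss Om Oms Dh D P q r X}"
    then have "transpose (Oh - Om - X) = - (Oh - Om - X) \<and> (Oh - Om - X) ** P = 0" using min_iff by blast
    moreover have "Oh = Om + X + (Oh - Om - X)" by simp
    ultimately show "Oh \<in> {Om + X + K | K. transpose K = - K \<and> K ** P = 0}" by blast
  next
    fix Oh assume "Oh \<in> {Om + X + K | K. transpose K = - K \<and> K ** P = 0}"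
    then obtain K where "Oh = Om + X + K" "transpose K = - K" "K ** P = 0" by blast
    then show "Oh \<in> {Oh. \<forall>X. sinkhorn_loss Om Oms Dh D P q r Oh \<le> sinkhorn_loss Om Oms Dh D P q r X}"
      using min_iff[of Oh] by simp
  qed
  have part2: "(\<exists>!Oh. \<forall>X. sinkhorn_loss Om Oms Dh D P q r Oh \<le> sinkhorn_loss Om Oms Dh D P q r X)
            \<longleftrightarrow> rank P + 1 \<ge> CARD('n)"
  proof
    assume u1: "\<exists>!Oh. \<forall>X. sinkhorn_loss Om Oms Dh D P q r Oh \<le> sinkhorn_loss Om Oms Dh D P q r X"
    show "rank P + 1 \<ge> CARD('n)"
    proof (rule ccontr)
      assume "\<not> rank P + 1 \<ge> CARD('n)"
      then have "l + 2 \<le> CARD('n)" using ldef by simp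
      then obtain K :: "real^'n^'n" where K: "transpose K = - K" "K ** P = 0" "K \<noteq> 0"
        using nonunique by blast
      have m1: "\<forall>Y. sinkhorn_loss Om Oms Dh D P q r (Om + X) \<le> sinkhorn_loss Om Oms Dh D P q r Y"
        using min_iff[of "Om + X"] by (simp add: transpose_zero')
      have m2: "\<forall>Y. sinkhorn_loss Om Oms Dh D P q r (Om + X + K) \<le> sinkhorn_loss Om Oms Dh D P q r Y"
        using min_iff[of "Om + X + K"] K by simp
      have "Om + X = Om + X + K" using u1 m1 m2 by blast
      then show False using K(3) by simp
    qed
  next
    assume "rank P + 1 \<ge> CARD('n)"
    then have n: "CARD('n) \<le> l + 1" using ldef by simp
    have m1: "\<forall>Y. sinkhorn_loss Om Oms Dh D P q r (Om + X) \<le> sinkhorn_loss Om Oms Dh D P q r Y"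
      using min_iff[of "Om + X"] by (simp add: transpose_zero')
    show "\<exists>!Oh. \<forall>X. sinkhorn_loss Om Oms Dh D P q r Oh \<le> sinkhorn_loss Om Oms Dh D P q r X"
    proof (rule ex1I[of _ "Om + X"])
      show "\<forall>Y. sinkhorn_loss Om Oms Dh D P q r (Om + X) \<le> sinkhorn_loss Om Oms Dh D P q r Y" by (rule m1)
      fix Oh assume "\<forall>Y. sinkhorn_loss Om Oms Dh D P q r Oh \<le> sinkhorn_loss Om Oms Dh D P q r Y"
      then have "transpose (Oh - Om - X) = - (Oh - Om - X) \<and> (Oh - Om - X) ** P = 0" using min_iff by blast
      then have "Oh - Om - X = 0" using kill[OF n] by blast
      then show "Oh = Om + X" by (simp add: algebra_simps)
    qed
  qed
  show ?thesis using part1 part2 by blast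
qed

end
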